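(* Let $M$ be a finite MDP with fairness setup and $p_{\mathrm{maj}},p_{\mathrm{min}}>0$. Let $R_{\max}>0$ satisfy $|R_{s,a}|\le R_{\max}$ and $|\rho_{s,a}|\le R_{\max}$ for all $s,a$. Let $\epsilon>0$, $\sigma\in(0,1/2]$, and let $T$ be a positive integer with $\dfrac{\gamma^TR_{\max}}{1-\gamma}\le\dfrac{\sigma^2\epsilon}{4}$. Let $\pi^*$ be a maximizer of $R^{(\pi)}$ over $\pi\in\Pi_{\mathrm{DP},(1-\sigma)^2\epsilon}$ and let $\tilde\pi^*$ be a maximizer of $\tilde R^{(\pi)}$ over $\pi\in\tilde\Pi_{\mathrm{DP},(1-\sigma)\epsilon}$ (both assumed to exist). Then $\tilde\pi^*\in\Pi_{\mathrm{DP},\epsilon}$ and $R^{(\pi^* )}-R^{(\tilde\pi^* )}\le\sigma^2\epsilon/2$.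
   Context: A finite MDP is $M=(S,A,D,P,R,\gamma)$ where $S,A$ are finite nonempty sets, $D$ is a probability distribution on $S$, $P_{s,a,s'}\ge 0$ with $\sum_{s'}P_{s,a,s'}=1$ for all $s,a$, $R\in\mathbb{R}^{S\times A}$, and $\gamma\in(0,1)$. A policy is $\pi\in\mathbb{R}^{S\times A}$ with $\pi_{s,a}\ge0$ and $\sum_a\pi_{s,a}=1$. Let $P^{(\pi)}_{s,s'}=\sum_a\pi_{s,a}P_{s,a,s'}$. For a distribution $\mu$ on $S$ set $\mu^{(\pi,0)}=\mu$, $\mu^{(\pi,t)}_{s'}=\sum_s\mu^{(\pi,t-1)}_sP^{(\pi)}_{s,s'}$, and $\mu^{(\pi)}=(1-\gamma)\sum_{t\ge0}\gamma^t\mu^{(\pi,t)}$. Write $D^{(\pi,t)},D^{(\pi)}$ for $\mu=D$, $\Lambda^{(\pi)}_{s,a}=D^{(\pi)}_s\pi_{s,a}$, and $R^{(\pi)}=(1-\gamma)^{-1}\sum_{s,a}\Lambda^{(\pi)}_{s,a}R_{s,a}$. Fairness setup: $S=Z\times\tilde S$ with $Z=\{\mathrm{maj},\mathrm{min}\}$ and $\tilde S$ finite nonempty; agent rewards $\rho\in\mathbb{R}^{S\times A}$. For $z\in Z$, $p_z=\sum_{\tilde s}D_{(z,\tilde s)}$, $D_z$ is the distribution $(D_z)_s=D_s\cdot\mathbb{I}[s=(z,\tilde s)\text{ for some }\tilde s]/p_z$, $D_z^{(\pi,t)},D_z^{(\pi)}$ are $\mu^{(\pi,t)},\mu^{(\pi)}$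 for $\mu=D_z$, $(\Lambda_z^{(\pi)})_{s,a}=(D_z^{(\pi)})_s\pi_{s,a}$, and $\rho_z^{(\pi)}=\sum_{s,a}(\Lambda_z^{(\pi)})_{s,a}\rho_{s,a}$. For $\eta\ge0$, $\Pi_{\mathrm{DP},\eta}$ is the set of policies with $|\rho_{\mathrm{maj}}^{(\pi)}-\rho_{\mathrm{min}}^{(\pi)}|\le\eta$. Truncated quantities: $\tilde R^{(\pi)}=\sum_{t=0}^{T-1}\gamma^t\sum_{s,a}D^{(\pi,t)}_s\pi_{s,a}R_{s,a}$, $\tilde\rho_z^{(\pi)}=(1-\gamma)\sum_{t=0}^{T-1}\gamma^t\sum_{s,a}(D_z^{(\pi,t)})_s\pi_{s,a}\rho_{s,a}$, and $\tilde\Pi_{\mathrm{DP},\eta}$ is the set of policies with $|\tilde\rho_{\mathrm{maj}}^{(\pi)}-\tilde\rho_{\mathrm{min}}^{(\pi)}|\le\eta$. *)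

theory Defs
  imports "HOL-Analysis.Analysis"
begin

text \<open>States and actions are finite types; in the fairness setup the
state type is grp \<times> 's, i.e. S = Z \<times> S~ with Z = {maj, min}.\<close>

datatype grp = Maj | Min

instance grp :: finite
proof
  have "(UNIV :: grp set) = {Maj, Min}" using grp.exhaust by auto
  then show "finite (UNIV :: grp set)" by (metis finite.emptyI finite_insert)
qed

definition is_dist :: "('s::finite \<Rightarrow> real) \<Rightarrow> bool" where
  "is_dist \<mu> \<longleftrightarrow> (\<forall>s. \<mu> s \<ge> 0) \<and> (\<Sum>s\<in>UNIV. \<mu> s) = 1"

definition is_mdp ::
  "('s::finite \<Rightarrow> real) \<Rightarrow> ('s \<Rightarrow> 'a::finite \<Rightarrow> 's \<Rightarrow> real) \<Rightarrow> real \<Rightarrow> bool" where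
  "is_mdp D P g \<longleftrightarrow> is_dist D \<and> (\<forall>s a. is_dist (P s a)) \<and> 0 < g \<and> g < 1"

definition is_policy :: "('s::finite \<Rightarrow> 'a::finite \<Rightarrow> real) \<Rightarrow> bool" where
  "is_policy \<pi> \<longleftrightarrow> (\<forall>s a. \<pi> s a \<ge> 0) \<and> (\<forall>s. (\<Sum>a\<in>UNIV. \<pi> s a) = 1)"

definition Ppol :: "('s::finite \<Rightarrow> 'a::finite \<Rightarrow> 's \<Rightarrow> real) \<Rightarrow> ('s \<Rightarrow> 'a \<Rightarrow> real) \<Rightarrow> 's \<Rightarrow> 's \<Rightarrow> real" where
  "Ppol P \<pi> s s' = (\<Sum>a\<in>UNIV. \<pi> s a * P s a s')"

fun state_dist :: "('s::finite \<Rightarrow> 'a::finite \<Rightarrow> 's \<Rightarrow> real) \<Rightarrow> ('s \<Rightarrow> 'a \<Rightarrow> real) \<Rightarrow> ('s \<Rightarrow> real) \<Rightarrow> nat \<Rightarrow> 's \<Rightarrow> real" where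
  "state_dist P \<pi> \<mu> 0 = \<mu>"
| "state_dist P \<pi> \<mu> (Suc t) = (\<lambda>s'. \<Sum>s\<in>UNIV. state_dist P \<pi> \<mu> t s * Ppol P \<pi> s s')"

definition occ :: "('s::finite \<Rightarrow> 'a::finite \<Rightarrow> 's \<Rightarrow> real) \<Rightarrow> real \<Rightarrow> ('s \<Rightarrow> 'a \<Rightarrow> real) \<Rightarrow> ('s \<Rightarrow> real) \<Rightarrow> 's \<Rightarrow> real" where
  "occ P g \<pi> \<mu> s = (1 - g) * (\<Sum>t. g ^ t * state_dist P \<pi> \<mu> t s)"

definition ret :: "('s::finite \<Rightarrow> real) \<Rightarrow> ('s \<Rightarrow> 'a::finite \<Rightarrow> 's \<Rightarrow> real) \<Rightarrow> ('s \<Rightarrow> 'a \<Rightarrow> real) \<Rightarrow> real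
                   \<Rightarrow> ('s \<Rightarrow> 'a \<Rightarrow> real) \<Rightarrow> real" where
  "ret D P R g \<pi> = inverse (1 - g) * (\<Sum>s\<in>UNIV. \<Sum>a\<in>UNIV. occ P g \<pi> D s * \<pi> s a * R s a)"

definition tret :: "nat \<Rightarrow> ('s::finite \<Rightarrow> real) \<Rightarrow> ('s \<Rightarrow> 'a::finite \<Rightarrow> 's \<Rightarrow> real) \<Rightarrow> ('s \<Rightarrow> 'a \<Rightarrow> real) \<Rightarrow> real
                   \<Rightarrow> ('s \<Rightarrow> 'a \<Rightarrow> real) \<Rightarrow> real" where
  "tret T D P R g \<pi> = (\<Sum>t<T. g ^ t * (\<Sum>s\<in>UNIV. \<Sum>a\<in>UNIV. state_dist P \<pi> D t s * \<pi> s a * R s a))"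

definition grp_prob :: "(grp \<times> 's::finite \<Rightarrow> real) \<Rightarrow> grp \<Rightarrow> real" where
  "grp_prob D z = (\<Sum>s\<in>UNIV. D (z, s))"

definition grp_dist :: "(grp \<times> 's::finite \<Rightarrow> real) \<Rightarrow> grp \<Rightarrow> grp \<times> 's \<Rightarrow> real" where
  "grp_dist D z s = (if fst s = z then D s / grp_prob D z else 0)"

definition grp_rew :: "(grp \<times> 's::finite \<Rightarrow> real) \<Rightarrow> (grp \<times> 's \<Rightarrow> 'a::finite \<Rightarrow> grp \<times> 's \<Rightarrow> real)
     \<Rightarrow> (grp \<times> 's \<Rightarrow> 'a \<Rightarrow> real) \<Rightarrow> real \<Rightarrow> (grp \<times> 's \<Rightarrow> 'a \<Rightarrow> real) \<Rightarrow> grp \<Rightarrow> real" where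
  "grp_rew D P \<rho> g \<pi> z =
     (\<Sum>s\<in>UNIV. \<Sum>a\<in>UNIV. occ P g \<pi> (grp_dist D z) s * \<pi> s a * \<rho> s a)"

definition tgrp_rew :: "nat \<Rightarrow> (grp \<times> 's::finite \<Rightarrow> real) \<Rightarrow> (grp \<times> 's \<Rightarrow> 'a::finite \<Rightarrow> grp \<times> 's \<Rightarrow> real)
     \<Rightarrow> (grp \<times> 's \<Rightarrow> 'a \<Rightarrow> real) \<Rightarrow> real \<Rightarrow> (grp \<times> 's \<Rightarrow> 'a \<Rightarrow> real) \<Rightarrow> grp \<Rightarrow> real" where
  "tgrp_rew T D P \<rho> g \<pi> z = (1 - g) *
     (\<Sum>t<T. g ^ t * (\<Sum>s\<in>UNIV. \<Sum>a\<in>UNIV. state_dist P \<pi> (grp_dist D z) t s * \<pi> s a * \<rho> s a))"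

definition Pi_DP :: "(grp \<times> 's::finite \<Rightarrow> real) \<Rightarrow> (grp \<times> 's \<Rightarrow> 'a::finite \<Rightarrow> grp \<times> 's \<Rightarrow> real)
     \<Rightarrow> (grp \<times> 's \<Rightarrow> 'a \<Rightarrow> real) \<Rightarrow> real \<Rightarrow> real \<Rightarrow> (grp \<times> 's \<Rightarrow> 'a \<Rightarrow> real) set" where
  "Pi_DP D P \<rho> g \<eta> = {\<pi>. is_policy \<pi> \<and> \<bar>grp_rew D P \<rho> g \<pi> Maj - grp_rew D P \<rho> g \<pi> Min\<bar> \<le> \<eta>}"

definition tPi_DP :: "nat \<Rightarrow> (grp \<times> 's::finite \<Rightarrow> real) \<Rightarrow> (grp \<times> 's \<Rightarrow> 'a::finite \<Rightarrow> grp \<times> 's \<Rightarrow> real)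
     \<Rightarrow> (grp \<times> 's \<Rightarrow> 'a \<Rightarrow> real) \<Rightarrow> real \<Rightarrow> real \<Rightarrow> (grp \<times> 's \<Rightarrow> 'a \<Rightarrow> real) set" where
  "tPi_DP T D P \<rho> g \<eta> = {\<pi>. is_policy \<pi> \<and> \<bar>tgrp_rew T D P \<rho> g \<pi> Maj - tgrp_rew T D P \<rho> g \<pi> Min\<bar> \<le> \<eta>}"

end

theory Submission
  imports Defs
begin

lemma sd_nonneg:
  assumes "\<forall>s. \<mu> s \<ge> 0" "\<forall>s a. \<pi> s a \<ge> 0" "\<forall>s a s'. P s a s' \<ge> 0"
  shows "state_dist P \<pi> \<mu> t s \<ge> 0"
proof (induction t arbitrary: s)
  case 0 then show ?case using assms(1) by simp
next
  case (Suc t)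
  have h: "\<And>s'. 0 \<le> Ppol P \<pi> s' s" unfolding Ppol_def
    using assms(2,3) by (intro sum_nonneg mult_nonneg_nonneg) auto
  have "0 \<le> (\<Sum>s'\<in>UNIV. state_dist P \<pi> \<mu> t s' * Ppol P \<pi> s' s)"
    by (intro sum_nonneg mult_nonneg_nonneg h Suc.IH)
  then show ?case by (simp only: state_dist.simps)
qed

lemma Ppol_sum:
  assumes "is_policy \<pi>" "\<forall>s a. is_dist (P s a)"
  shows "(\<Sum>s'\<in>UNIV. Ppol P \<pi> s s') = 1"
proof -
  have "(\<Sum>s'\<in>UNIV. Ppol P \<pi> s s') = (\<Sum>a\<in>UNIV. \<pi> s a * (\<Sum>s'\<in>UNIV. P s a s'))"
    unfolding Ppol_def by (subst sum.swap) (simp add: sum_distrib_left)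
  also have "\<dots> = 1" using assms by (simp add: is_dist_def is_policy_def)
  finally show ?thesis .
qed

lemma sd_sum:
  assumes "is_policy \<pi>" "\<forall>s a. is_dist (P s a)"
  shows "(\<Sum>s\<in>UNIV. state_dist P \<pi> \<mu> t s) = (\<Sum>s\<in>UNIV. \<mu> s)"
proof (induction t)
  case 0 then show ?case by simp
next
  case (Suc t)
  have "(\<Sum>s'\<in>UNIV. state_dist P \<pi> \<mu> (Suc t) s')
      = (\<Sum>s\<in>UNIV. state_dist P \<pi> \<mu> t s * (\<Sum>s'\<in>UNIV. Ppol P \<pi> s s'))"
    unfolding state_dist.simps by (subst sum.swap) (simp add: sum_distrib_left)
  also have "\<dots> = (\<Sum>s\<in>UNIV. state_dist P \<pi> \<mu> t s)" using Ppol_sum[OF assms] by simp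
  finally show ?case using Suc by simp
qed

lemma sd_le1:
  assumes "is_dist \<mu>" "is_policy \<pi>" "\<forall>s a. is_dist (P s a)"
  shows "state_dist P \<pi> \<mu> t s \<le> 1"
proof -
  have nn: "\<And>s. state_dist P \<pi> \<mu> t s \<ge> 0"
    using assms by (intro sd_nonneg) (auto simp: is_dist_def is_policy_def)
  have "state_dist P \<pi> \<mu> t s \<le> (\<Sum>s\<in>UNIV. state_dist P \<pi> \<mu> t s)"
    by (rule member_le_sum) (auto simp: nn)
  also have "\<dots> = 1" using sd_sum[OF assms(2,3)] assms(1) by (simp add: is_dist_def)
  finally show ?thesis .
qed

lemma E_bound:
  assumes "is_dist \<mu>" "is_policy \<pi>" "\<forall>s a. is_dist (P s a)" "\<forall>s a. \<bar>f s a\<bar> \<le> B"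
  shows "\<bar>\<Sum>s\<in>UNIV. \<Sum>a\<in>UNIV. state_dist P \<pi> \<mu> t s * \<pi> s a * f s a\<bar> \<le> B"
proof -
  have nn: "\<And>s. state_dist P \<pi> \<mu> t s \<ge> 0"
    using assms by (intro sd_nonneg) (auto simp: is_dist_def is_policy_def)
  have "\<bar>\<Sum>s\<in>UNIV. \<Sum>a\<in>UNIV. state_dist P \<pi> \<mu> t s * \<pi> s a * f s a\<bar>
     \<le> (\<Sum>s\<in>UNIV. \<Sum>a\<in>UNIV. \<bar>state_dist P \<pi> \<mu> t s * \<pi> s a * f s a\<bar>)"
    by (rule order_trans[OF sum_abs]) (intro sum_mono sum_abs)
  also have "\<dots> \<le> (\<Sum>s\<in>UNIV. \<Sum>a\<in>UNIV. state_dist P \<pi> \<mu> t s * \<pi> s a * B)"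
  proof (intro sum_mono)
    fix s a
    have "\<pi> s a \<ge> 0" using assms(2) by (simp add: is_policy_def)
    then show "\<bar>state_dist P \<pi> \<mu> t s * \<pi> s a * f s a\<bar> \<le> state_dist P \<pi> \<mu> t s * \<pi> s a * B"
      using nn[of s] assms(4) by (simp add: abs_mult mult_left_mono)
  qed
  also have "\<dots> = (\<Sum>s\<in>UNIV. state_dist P \<pi> \<mu> t s * (\<Sum>a\<in>UNIV. \<pi> s a)) * B"
    by (simp add: sum_distrib_left sum_distrib_right mult.assoc)
  also have "\<dots> = B" using assms sd_sum[OF assms(2,3)] by (simp add: is_policy_def is_dist_def)
  finally show ?thesis .
qed

lemma summable_geo_bounded:
  fixes x :: "nat \<Rightarrow> real"
  assumes "\<forall>t. \<bar>x t\<bar> \<le> B" "0 \<le> g" "g < 1"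
  shows "summable (\<lambda>t. g^t * x t)"
proof -
  have "norm g < 1" using assms by simp
  then have s1: "summable (\<lambda>t. g^t)" by (rule summable_geometric)
  have s2: "summable (\<lambda>t. g^t * B)" using summable_mult2[OF s1] .
  have b: "\<forall>n. norm (g ^ n * x n) \<le> g ^ n * B"
  proof
    fix n
    have e: "norm (g ^ n * x n) = g ^ n * \<bar>x n\<bar>" using assms(2) by (simp add: abs_mult power_abs)
    have "\<bar>x n\<bar> \<le> B" using assms(1) by blast
    then have "g ^ n * \<bar>x n\<bar> \<le> g ^ n * B" using assms(2) by (intro mult_left_mono) auto
    then show "norm (g ^ n * x n) \<le> g ^ n * B" using e by simp
  qed
  have "\<exists>N. \<forall>n\<ge>N. norm (g ^ n * x n) \<le> g ^ n * B" using b by blast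
  then show ?thesis using s2 by (rule summable_comparison_test)
qed

lemma tail_bound:
  fixes x :: "nat \<Rightarrow> real"
  assumes "\<forall>t. \<bar>x t\<bar> \<le> B" "0 \<le> g" "g < 1"
  shows "\<bar>(\<Sum>t. g^t * x t) - (\<Sum>t<T. g^t * x t)\<bar> \<le> g^T * B / (1 - g)"
proof -
  have sm: "summable (\<lambda>t. g^t * x t)" by (rule summable_geo_bounded[OF assms])
  have sp: "(\<Sum>t. g^t * x t) = (\<Sum>n. g^(n+T) * x (n+T)) + (\<Sum>t<T. g^t * x t)"
    using suminf_split_initial_segment[OF sm, of T] by simp
  have sm2: "summable (\<lambda>n. g^(n+T) * x (n+T))" using sm summable_iff_shift[where f="\<lambda>t. g^t * x t" and k=T] by blast
  have eq: "\<And>n. g^(n+T) * B = g^n * (g^T * B)" by (simp add: power_add)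
  have sg: "summable (\<lambda>n. g^(n+T) * B)"
  proof -
    have "summable (\<lambda>n. g^n * (g^T * B))" using assms by (intro summable_mult2 summable_geometric) auto
    then show ?thesis by (simp only: eq)
  qed
  have sgv: "(\<Sum>n. g^(n+T) * B) = g^T * B / (1 - g)"
  proof -
    have "(\<Sum>n. g^(n+T) * B) = (\<Sum>n. g^n * (g^T * B))" by (simp only: eq)
    also have "\<dots> = (\<Sum>n. g^n) * (g^T * B)"
      using assms by (intro suminf_mult2[symmetric] summable_geometric) auto
    also have "\<dots> = g^T * B / (1 - g)" using assms by (simp add: suminf_geometric)
    finally show ?thesis .
  qed
  have le1: "(\<Sum>n. g^(n+T) * x (n+T)) \<le> (\<Sum>n. g^(n+T) * B)"
  proof (rule suminf_le[OF _ sm2 sg])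
    fix n have "x (n+T) \<le> B" using assms(1)[rule_format, of "n+T"] by (simp add: abs_le_iff)
    then show "g^(n+T) * x (n+T) \<le> g^(n+T) * B" using assms(2) by (simp add: mult_left_mono)
  qed
  have le2: "(\<Sum>n. -(g^(n+T) * B)) \<le> (\<Sum>n. g^(n+T) * x (n+T))"
  proof (rule suminf_le[OF _ summable_minus[OF sg] sm2])
    fix n have "- B \<le> x (n+T)" using assms(1)[rule_format, of "n+T"] by (simp add: abs_le_iff)
    then have "g^(n+T) * (-B) \<le> g^(n+T) * x (n+T)" using assms(2) by (intro mult_left_mono) auto
    then show "-(g^(n+T) * B) \<le> g^(n+T) * x (n+T)" by simp
  qed
  have "(\<Sum>n. -(g^(n+T) * B)) = - (\<Sum>n. g^(n+T) * B)" using sg by (rule suminf_minus)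
  then show ?thesis using sp le1 le2 sgv by linarith
qed

lemma occ_sum:
  assumes "is_dist \<mu>" "is_policy \<pi>" "\<forall>s a. is_dist (P s a)" "0 \<le> g" "g < 1"
  shows "(\<Sum>s\<in>UNIV. \<Sum>a\<in>UNIV. occ P g \<pi> \<mu> s * \<pi> s a * f s a)
      = (1 - g) * (\<Sum>t. g^t * (\<Sum>s\<in>UNIV. \<Sum>a\<in>UNIV. state_dist P \<pi> \<mu> t s * \<pi> s a * f s a))"
proof -
  have nn: "\<And>t s. state_dist P \<pi> \<mu> t s \<ge> 0"
    using assms by (intro sd_nonneg) (auto simp: is_dist_def is_policy_def)
  have bd: "\<And>s. \<forall>t. \<bar>state_dist P \<pi> \<mu> t s\<bar> \<le> 1" using nn sd_le1[OF assms(1-3)] by auto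
  have sm: "\<And>s. summable (\<lambda>t. g^t * state_dist P \<pi> \<mu> t s)"
    using summable_geo_bounded[OF bd assms(4,5)] .
  have sm3: "\<And>s a. summable (\<lambda>t. g^t * (state_dist P \<pi> \<mu> t s * \<pi> s a * f s a))"
    using summable_mult2[OF sm] by (simp add: mult.assoc)
  have "\<And>s a. occ P g \<pi> \<mu> s * \<pi> s a * f s a
      = (1 - g) * (\<Sum>t. g^t * (state_dist P \<pi> \<mu> t s * \<pi> s a * f s a))"
  proof -
    fix s a
    have "(\<Sum>t. g^t * state_dist P \<pi> \<mu> t s) * (\<pi> s a * f s a)
        = (\<Sum>t. g^t * state_dist P \<pi> \<mu> t s * (\<pi> s a * f s a))"
      by (rule suminf_mult2[OF sm])
    then show "occ P g \<pi> \<mu> s * \<pi> s a * f s a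
      = (1 - g) * (\<Sum>t. g^t * (state_dist P \<pi> \<mu> t s * \<pi> s a * f s a))"
      unfolding occ_def by (simp add: mult.assoc)
  qed
  then have "(\<Sum>s\<in>UNIV. \<Sum>a\<in>UNIV. occ P g \<pi> \<mu> s * \<pi> s a * f s a)
     = (1 - g) * (\<Sum>s\<in>UNIV. \<Sum>a\<in>UNIV. \<Sum>t. g^t * (state_dist P \<pi> \<mu> t s * \<pi> s a * f s a))"
    by (simp add: sum_distrib_left)
  also have "(\<Sum>s\<in>UNIV. \<Sum>a\<in>UNIV. \<Sum>t. g^t * (state_dist P \<pi> \<mu> t s * \<pi> s a * f s a))
      = (\<Sum>s\<in>UNIV. \<Sum>t. \<Sum>a\<in>UNIV. g^t * (state_dist P \<pi> \<mu> t s * \<pi> s a * f s a))"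
    by (intro sum.cong refl suminf_sum[symmetric] sm3)
  also have "\<dots> = (\<Sum>t. \<Sum>s\<in>UNIV. \<Sum>a\<in>UNIV. g^t * (state_dist P \<pi> \<mu> t s * \<pi> s a * f s a))"
    by (intro suminf_sum[symmetric] summable_sum sm3)
  also have "\<dots> = (\<Sum>t. g^t * (\<Sum>s\<in>UNIV. \<Sum>a\<in>UNIV. state_dist P \<pi> \<mu> t s * \<pi> s a * f s a))"
    by (simp add: sum_distrib_left)
  finally show ?thesis .
qed


lemma grp_dist_dist:
  assumes "is_dist D" "grp_prob D z > 0"
  shows "is_dist (grp_dist D z)"
proof -
  have nn: "\<forall>s. grp_dist D z s \<ge> 0" using assms by (auto simp: grp_dist_def is_dist_def)
  have "(\<Sum>x\<in>UNIV. grp_dist D z x) = (\<Sum>x\<in>UNIV \<times> UNIV. grp_dist D z x)" by simp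
  also have "\<dots> = (\<Sum>z'\<in>UNIV. \<Sum>s\<in>UNIV. grp_dist D z (z', s))"
    by (subst sum.cartesian_product) simp
  also have "\<dots> = (\<Sum>z'\<in>UNIV. if z' = z then (\<Sum>s\<in>UNIV. D (z', s)) / grp_prob D z else 0)"
    by (intro sum.cong refl) (auto simp: grp_dist_def sum_divide_distrib)
  also have "\<dots> = (\<Sum>s\<in>UNIV. D (z, s)) / grp_prob D z" by simp
  also have "\<dots> = 1" using assms by (simp add: grp_prob_def)
  finally show ?thesis using nn by (simp add: is_dist_def)
qed

lemma ret_tret:
  assumes "is_dist D" "is_policy \<pi>" "\<forall>s a. is_dist (P s a)" "0 \<le> g" "g < 1" "\<forall>s a. \<bar>R s a\<bar> \<le> B"
  shows "\<bar>ret D P R g \<pi> - tret T D P R g \<pi>\<bar> \<le> g^T * B / (1 - g)"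
proof -
  let ?x = "\<lambda>t. \<Sum>s\<in>UNIV. \<Sum>a\<in>UNIV. state_dist P \<pi> D t s * \<pi> s a * R s a"
  have "ret D P R g \<pi> = inverse (1 - g) * ((1 - g) * (\<Sum>t. g^t * ?x t))"
    unfolding ret_def using occ_sum[OF assms(1-5)] by simp
  also have "\<dots> = (\<Sum>t. g^t * ?x t)" using assms by simp
  finally have "ret D P R g \<pi> = (\<Sum>t. g^t * ?x t)" .
  moreover have "tret T D P R g \<pi> = (\<Sum>t<T. g^t * ?x t)" by (simp add: tret_def)
  moreover have "\<forall>t. \<bar>?x t\<bar> \<le> B" using E_bound[OF assms(1-3,6)] by blast
  ultimately show ?thesis using tail_bound[of ?x B g T] assms by simp
qed

lemma grp_tgrp:
  assumes "is_dist D" "grp_prob D z > 0" "is_policy \<pi>" "\<forall>s a. is_dist (P s a)" "0 \<le> g" "g < 1"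
     "\<forall>s a. \<bar>\<rho> s a\<bar> \<le> B"
  shows "\<bar>grp_rew D P \<rho> g \<pi> z - tgrp_rew T D P \<rho> g \<pi> z\<bar> \<le> g^T * B"
proof -
  have dz: "is_dist (grp_dist D z)" by (rule grp_dist_dist[OF assms(1,2)])
  let ?x = "\<lambda>t. \<Sum>s\<in>UNIV. \<Sum>a\<in>UNIV. state_dist P \<pi> (grp_dist D z) t s * \<pi> s a * \<rho> s a"
  have e1: "grp_rew D P \<rho> g \<pi> z = (1 - g) * (\<Sum>t. g^t * ?x t)"
    unfolding grp_rew_def using occ_sum[OF dz assms(3-6)] by simp
  have e2: "tgrp_rew T D P \<rho> g \<pi> z = (1 - g) * (\<Sum>t<T. g^t * ?x t)" by (simp add: tgrp_rew_def)
  have "\<forall>t. \<bar>?x t\<bar> \<le> B" using E_bound[OF dz assms(3,4,7)] by blast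
  then have tb: "\<bar>(\<Sum>t. g^t * ?x t) - (\<Sum>t<T. g^t * ?x t)\<bar> \<le> g^T * B / (1 - g)"
    using tail_bound[of ?x B g T] assms by simp
  have "\<bar>grp_rew D P \<rho> g \<pi> z - tgrp_rew T D P \<rho> g \<pi> z\<bar>
      = (1 - g) * \<bar>(\<Sum>t. g^t * ?x t) - (\<Sum>t<T. g^t * ?x t)\<bar>"
  proof -
    have "grp_rew D P \<rho> g \<pi> z - tgrp_rew T D P \<rho> g \<pi> z
        = (1 - g) * ((\<Sum>t. g^t * ?x t) - (\<Sum>t<T. g^t * ?x t))"
      unfolding e1 e2 by (rule right_diff_distrib[symmetric])
    moreover have h: "0 \<le> 1 - g" using assms(6) by simp
    ultimately show ?thesis by (simp only: abs_mult abs_of_nonneg[OF h])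
  qed
  also have "\<dots> \<le> (1 - g) * (g^T * B / (1 - g))" using tb assms by (intro mult_left_mono) auto
  also have "\<dots> = g^T * B" using assms by simp
  finally show ?thesis .
qed

theorem theorem5:
  fixes D :: "grp \<times> 's::finite \<Rightarrow> real"
    and P :: "grp \<times> 's \<Rightarrow> 'a::finite \<Rightarrow> grp \<times> 's \<Rightarrow> real"
    and R \<rho> :: "grp \<times> 's \<Rightarrow> 'a \<Rightarrow> real"
    and g Rmax \<epsilon> \<sigma> :: real and T :: nat
    and \<pi>s \<pi>t :: "grp \<times> 's \<Rightarrow> 'a \<Rightarrow> real"
  assumes mdp: "is_mdp D P g"
    and pmaj: "grp_prob D Maj > 0" and pmin: "grp_prob D Min > 0"
    and Rmax: "Rmax > 0" "\<forall>s a. \<bar>R s a\<bar> \<le> Rmax" "\<forall>s a. \<bar>\<rho> s a\<bar> \<le> Rmax"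
    and eps: "\<epsilon> > 0"
    and sigma: "0 < \<sigma>" "\<sigma> \<le> 1/2"
    and T: "T > 0" "g ^ T * Rmax / (1 - g) \<le> \<sigma>\<^sup>2 * \<epsilon> / 4"
    and opt: "\<pi>s \<in> Pi_DP D P \<rho> g ((1 - \<sigma>)\<^sup>2 * \<epsilon>)"
             "\<forall>\<pi>\<in>Pi_DP D P \<rho> g ((1 - \<sigma>)\<^sup>2 * \<epsilon>). ret D P R g \<pi> \<le> ret D P R g \<pi>s"
    and topt: "\<pi>t \<in> tPi_DP T D P \<rho> g ((1 - \<sigma>) * \<epsilon>)"
             "\<forall>\<pi>\<in>tPi_DP T D P \<rho> g ((1 - \<sigma>) * \<epsilon>). tret T D P R g \<pi> \<le> tret T D P R g \<pi>t"
  shows "\<pi>t \<in> Pi_DP D P \<rho> g \<epsilon> \<and> ret D P R g \<pi>s - ret D P R g \<pi>t \<le> \<sigma>\<^sup>2 * \<epsilon> / 2"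
  proof -
  have dD: "is_dist D" and dP: "\<forall>s a. is_dist (P s a)" and g0: "0 \<le> g" and g1: "g < 1"
    using mdp by (auto simp: is_mdp_def)
  define K where "K = g ^ T * Rmax / (1 - g)"
  have K: "K \<le> \<sigma>\<^sup>2 * \<epsilon> / 4" using T(2) by (simp add: K_def)
  have gTR: "g^T * Rmax \<le> K"
  proof -
    have "g^T * Rmax = (1 - g) * K" using g1 by (simp add: K_def)
    also have "\<dots> \<le> K"
    proof -
      have "0 \<le> K" using g0 g1 Rmax(1) by (simp add: K_def)
      then have "0 \<le> g * K" using g0 by simp
      then show ?thesis by (simp add: algebra_simps)
    qed
    finally show ?thesis .
  qed
  have gTR0: "0 \<le> g^T * Rmax" using g0 Rmax(1) by simp
  have pol_s: "is_policy \<pi>s" and fs: "\<bar>grp_rew D P \<rho> g \<pi>s Maj - grp_rew D P \<rho> g \<pi>s Min\<bar> \<le> (1 - \<sigma>)\<^sup>2 * \<epsilon>"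
    using opt(1) by (auto simp: Pi_DP_def)
  have pol_t: "is_policy \<pi>t" and ft: "\<bar>tgrp_rew T D P \<rho> g \<pi>t Maj - tgrp_rew T D P \<rho> g \<pi>t Min\<bar> \<le> (1 - \<sigma>) * \<epsilon>"
    using topt(1) by (auto simp: tPi_DP_def)
  have a1: "\<bar>grp_rew D P \<rho> g \<pi>t Maj - tgrp_rew T D P \<rho> g \<pi>t Maj\<bar> \<le> g^T * Rmax"
    by (rule grp_tgrp[OF dD pmaj pol_t dP g0 g1 Rmax(3)])
  have a2: "\<bar>grp_rew D P \<rho> g \<pi>t Min - tgrp_rew T D P \<rho> g \<pi>t Min\<bar> \<le> g^T * Rmax"
    by (rule grp_tgrp[OF dD pmin pol_t dP g0 g1 Rmax(3)])
  have b1: "\<bar>grp_rew D P \<rho> g \<pi>s Maj - tgrp_rew T D P \<rho> g \<pi>s Maj\<bar> \<le> g^T * Rmax"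
    by (rule grp_tgrp[OF dD pmaj pol_s dP g0 g1 Rmax(3)])
  have b2: "\<bar>grp_rew D P \<rho> g \<pi>s Min - tgrp_rew T D P \<rho> g \<pi>s Min\<bar> \<le> g^T * Rmax"
    by (rule grp_tgrp[OF dD pmin pol_s dP g0 g1 Rmax(3)])
  have s2: "\<sigma>\<^sup>2 * \<epsilon> \<le> \<sigma> * \<epsilon>"
  proof -
    have "\<sigma>\<^sup>2 \<le> \<sigma>" using sigma by (simp add: power2_eq_square mult_le_cancel_left1)
    then show ?thesis using eps by (simp add: mult_right_mono)
  qed
  have s3: "(1 - \<sigma>)\<^sup>2 * \<epsilon> + \<sigma>\<^sup>2 * \<epsilon> / 2 \<le> (1 - \<sigma>) * \<epsilon>"
  proof -
    have ss: "\<sigma> * \<sigma> \<le> \<sigma> * (1/2)" using sigma by (intro mult_left_mono) auto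
    have "(1 - \<sigma>)\<^sup>2 + \<sigma>\<^sup>2 / 2 = 1 - 2 * \<sigma> + (3/2) * (\<sigma> * \<sigma>)"
      by (simp add: power2_eq_square algebra_simps)
    then have "(1 - \<sigma>)\<^sup>2 + \<sigma>\<^sup>2 / 2 \<le> 1 - \<sigma>" using ss sigma by linarith
    then have "((1 - \<sigma>)\<^sup>2 + \<sigma>\<^sup>2 / 2) * \<epsilon> \<le> (1 - \<sigma>) * \<epsilon>" using eps by (simp add: mult_right_mono)
    then show ?thesis by (simp add: algebra_simps)
  qed
  have "\<bar>grp_rew D P \<rho> g \<pi>t Maj - grp_rew D P \<rho> g \<pi>t Min\<bar> \<le> \<epsilon>"
  proof -
    have "(1 - \<sigma>) * \<epsilon> = \<epsilon> - \<sigma> * \<epsilon>" by (simp add: algebra_simps)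
    moreover have "0 \<le> \<sigma>\<^sup>2 * \<epsilon>" using eps by simp
    ultimately have "(1 - \<sigma>) * \<epsilon> + \<sigma>\<^sup>2 * \<epsilon> / 2 \<le> \<epsilon>" using s2 by linarith
    then show ?thesis using a1 a2 ft gTR K by linarith
  qed
  then have c1: "\<pi>t \<in> Pi_DP D P \<rho> g \<epsilon>" unfolding Pi_DP_def using pol_t by blast
  have "\<bar>tgrp_rew T D P \<rho> g \<pi>s Maj - tgrp_rew T D P \<rho> g \<pi>s Min\<bar> \<le> (1 - \<sigma>) * \<epsilon>"
    using b1 b2 fs gTR K s3 by linarith
  then have "\<pi>s \<in> tPi_DP T D P \<rho> g ((1 - \<sigma>) * \<epsilon>)" unfolding tPi_DP_def using pol_s by blast
  then have tl: "tret T D P R g \<pi>s \<le> tret T D P R g \<pi>t" using topt(2) by blast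
  have r1: "\<bar>ret D P R g \<pi>s - tret T D P R g \<pi>s\<bar> \<le> K"
    unfolding K_def by (rule ret_tret[OF dD pol_s dP g0 g1 Rmax(2)])
  have r2: "\<bar>ret D P R g \<pi>t - tret T D P R g \<pi>t\<bar> \<le> K"
    unfolding K_def by (rule ret_tret[OF dD pol_t dP g0 g1 Rmax(2)])
  have "ret D P R g \<pi>s - ret D P R g \<pi>t \<le> \<sigma>\<^sup>2 * \<epsilon> / 2" using r1 r2 tl K by linarith
  with c1 show ?thesis by blast
qed

end
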